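(* Let $\mathcal{S}$ and $\mathcal{S}'$ be square-free stratified staged trees, each of whose stages consist of situations at a single level, which are statistically equivalent via a bijection $\varphi:\Lambda(\mathcal{S})\to\Lambda(\mathcal{S}')$. Let $\alpha>0$, let $\mathcal{D}=(N_\lambda)_{\lambda\in\Lambda(\mathcal{S})}$ be a complete data sample on $\mathcal{S}$ and $\mathcal{D}'$ the sample on $\mathcal{S}'$ with $N'_{\varphi(\lambda)}=N_\lambda$. Then $\mathrm{CS\text{-}BDeu}(\mathcal{S},\mathcal{D};\alpha)=\mathrm{CS\text{-}BDeu}(\mathcal{S}',\mathcal{D}';\alpha)$.
   Context: An event tree is a finite directed rooted tree with edges directed away from the root; leaves have no outgoing edges, other nodes are situations; the level of a node is its distance from the root. A staged tree is an event tree with a partition of its situations into stages, situations in a common stage having the same number of outgoing edges, labelled consistently, with the $k$-th edges sharing a transition probability; its model is the set of distributions on the set $\Lambda(\mathcal{S})$ of root-to-leaf paths obtained by choosing a positive probability vector for each stage and multiplying edge probabilities along paths. Square-free: no two situations on one root-to-leaf path lie in the same stage. $\mathcal{S},\mathcal{S}'$ are statistically equivalent via a bijection $\varphi$ if the model of $\mathcal{S}$ equals $\{p\circ\varphi: p$ in the model of $\mathcal{S}'\}$. For variables $X_1,\dots,X_n$ with finite state spaces $\mathbb{X}_i$, an event tree is $\mathcal{X}$-compatible if its nodes are the root together with one node $v(x_1,\dots,x_k)$ for each $(x_1,\dots,x_k)\in\mathbb{X}_1\times\dots\times\mathbb{X}_k$, $1\le k\le n$, with edges from $v(x_1,\dots,x_{k-1})$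 to $v(x_1,\dots,x_k)$; a staged tree is stratified if its event tree is $\mathcal{X}$-compatible for some $\mathcal{X}$. Data: a complete sample assigns counts $N_\lambda$ to paths; $n_{jk}$ is the number of units passing through the $k$-th edge of some situation in stage $u_j$, $\overline n_j=\sum_k n_{jk}$. The BD-metric with hyperparameters $\alpha_{jk}$, $\overline\alpha_j=\sum_k\alpha_{jk}$, is $\prod_j\big[\Gamma(\overline\alpha_j)/\Gamma(\overline\alpha_j+\overline n_j)\prod_k\Gamma(\alpha_{jk}+n_{jk})/\Gamma(\alpha_{jk})\big]$. CS-BDeu: hyperparameters are propagated forward from the root. The root stage has $\dot\alpha=\alpha$. For a stage $u_{ij}$ at level $i-1$ with $h_{ij}$ situations and $r_{ij}$ outgoing edges per situation, $\dot\alpha_{ij}$ is the sum of the (individual) hyperparameters of the edges entering its situations, the stage edge hyperparameters are $\alpha_{ijk}=\dot\alpha_{ij}/r_{ij}$, and each individual edge emanating from a situation of $u_{ij}$ along label $k$ receives hyperparameter $\alpha_{ijk}/h_{ij}$. The CS-BDeu score is the BD-metric with stage hyperparameters $\alpha_{ijk}$. *)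

theory Defs
  imports "HOL-Analysis.Analysis"
begin

text \<open>Variables X_0,...,X_{n-1} with state spaces
  {0..<sizes!i}.  Nodes of the (X-compatible) event tree are the lists
  [x_0,...,x_{k-1}] with x_i < sizes!i and k \<le> n; the root is [], the edge
  from v(x_0..x_{k-1}) goes to v(x_0..x_k).  Situations are the nodes of length
  < n, root-to-leaf paths are identified with the leaves (length n).
  The staging is given by a function assigning a stage name to each
  situation (stages = its fibres on the situations); the consistent edge
  labelling assigns to the edge of situation s towards child value x the label
  index lab s x in {0..<number of outgoing edges}.\<close>

record stree =
  sizes :: "nat list"
  stage :: "nat list \<Rightarrow> nat"
  lab   :: "nat list \<Rightarrow> nat \<Rightarrow> nat"

definition nodes_at :: "stree \<Rightarrow> nat \<Rightarrow> nat list set" where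
  "nodes_at T k = {s. length s = k \<and> (\<forall>i<k. s ! i < sizes T ! i)}"

definition situations :: "stree \<Rightarrow> nat list set" where
  "situations T = {s. length s < length (sizes T) \<and> (\<forall>i<length s. s ! i < sizes T ! i)}"

definition paths :: "stree \<Rightarrow> nat list set" where
  "paths T = nodes_at T (length (sizes T))"

definition nout :: "stree \<Rightarrow> nat list \<Rightarrow> nat" where
  "nout T s = sizes T ! length s"

definition staged_tree :: "stree \<Rightarrow> bool" where
  "staged_tree T \<longleftrightarrow>
     (\<forall>i<length (sizes T). sizes T ! i > 0) \<and>
     (\<forall>s\<in>situations T. \<forall>t\<in>situations T. stage T s = stage T t \<longrightarrow> nout T s = nout T t) \<and>
     (\<forall>s\<in>situations T. bij_betw (lab T s) {0..<nout T s} {0..<nout T s})"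

definition square_free :: "stree \<Rightarrow> bool" where
  "square_free T \<longleftrightarrow>
     (\<forall>l\<in>paths T. \<forall>i j. i < j \<and> j < length (sizes T) \<longrightarrow> stage T (take i l) \<noteq> stage T (take j l))"

definition single_level_stages :: "stree \<Rightarrow> bool" where
  "single_level_stages T \<longleftrightarrow>
     (\<forall>s\<in>situations T. \<forall>t\<in>situations T. stage T s = stage T t \<longrightarrow> length s = length t)"

definition model :: "stree \<Rightarrow> (nat list \<Rightarrow> real) set" where
  "model T = {p. \<exists>\<theta> :: nat \<Rightarrow> nat \<Rightarrow> real.
      (\<forall>s\<in>situations T. (\<forall>k<nout T s. \<theta> (stage T s) k > 0) \<and>
                          (\<Sum>k<nout T s. \<theta> (stage T s) k) = 1) \<and>
      p = (\<lambda>l. if l \<in> paths T then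
                 (\<Prod>i<length (sizes T). \<theta> (stage T (take i l)) (lab T (take i l) (l ! i)))
               else undefined)}"

definition stat_equiv :: "stree \<Rightarrow> stree \<Rightarrow> (nat list \<Rightarrow> nat list) \<Rightarrow> bool" where
  "stat_equiv T T' \<phi> \<longleftrightarrow> bij_betw \<phi> (paths T) (paths T') \<and>
     model T = (\<lambda>p. restrict (p \<circ> \<phi>) (paths T)) ` model T'"

text \<open>CS-BDeu.  Stages are indexed by (level, stage name).\<close>

definition stage_sits :: "stree \<Rightarrow> nat \<Rightarrow> nat \<Rightarrow> nat list set" where
  "stage_sits T L u = {s\<in>situations T. length s = L \<and> stage T s = u}"

text \<open>dot_alpha T a L u: the hyperparameter of stage u at level L, i.e. the
  sum of the individual hyperparameters of the edges entering its situations
  (alpha for the root stage).  An individual edge leaving a situation of a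
  stage v at level L carries (dot_alpha v / r_v) / h_v.\<close>
primrec dot_alpha :: "stree \<Rightarrow> real \<Rightarrow> nat \<Rightarrow> nat \<Rightarrow> real" where
  "dot_alpha T a 0 = (\<lambda>u. a)"
| "dot_alpha T a (Suc L) = (\<lambda>u. \<Sum>s\<in>stage_sits T (Suc L) u.
      (dot_alpha T a L (stage T (butlast s)) / real (sizes T ! L))
        / real (card (stage_sits T L (stage T (butlast s)))))"

definition cnt :: "stree \<Rightarrow> (nat list \<Rightarrow> nat) \<Rightarrow> nat \<Rightarrow> nat \<Rightarrow> nat \<Rightarrow> nat" where
  "cnt T N L u k = (\<Sum>l\<in>{l\<in>paths T. stage T (take L l) = u \<and> lab T (take L l) (l ! L) = k}. N l)"

definition stages :: "stree \<Rightarrow> (nat \<times> nat) set" where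
  "stages T = {(length s, stage T s) | s. s \<in> situations T}"

definition cs_bdeu :: "stree \<Rightarrow> (nat list \<Rightarrow> nat) \<Rightarrow> real \<Rightarrow> real" where
  "cs_bdeu T N a = (\<Prod>(L, u)\<in>stages T.
     (let ad = dot_alpha T a L u; r = sizes T ! L;
          nbar = (\<Sum>k<r. cnt T N L u k)
      in Gamma ad / Gamma (ad + real nbar) *
         (\<Prod>k<r. Gamma (ad / real r + real (cnt T N L u k)) / Gamma (ad / real r))))"

end

theory Submission
  imports Defs "HOL-Library.Multiset" "HOL-Real_Asymp.Real_Asymp"
begin


definition xlx :: "real \<Rightarrow> real" where "xlx x = x * ln x"

lemma lim1: fixes m k :: real assumes "k > 0"
  shows "((\<lambda>t. m * xlx (k * t)) \<longlongrightarrow> 0) (at_right 0)"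
  unfolding xlx_def using assms by real_asymp

lemma lim2: fixes m k :: real assumes "k > 0" "m > 0"
  shows "filterlim (\<lambda>t. m * k * ln (k * t)) at_bot (at_right 0)"
  using assms by real_asymp

lemma deriv_msum:
  fixes M :: "'b multiset" and al be :: "'b \<Rightarrow> real"
  assumes "\<forall>B\<in>#M. be B > 0"
  shows "\<exists>D. ((\<lambda>t. \<Sum>B\<in>#M. xlx (al B * t + be B)) has_real_derivative D) (at 0)"
  using assms
proof (induction M)
  case empty
  show ?case by (rule exI[of _ 0]) simp
next
  case (add x M)
  then obtain D where D: "((\<lambda>t. \<Sum>B\<in>#M. xlx (al B * t + be B)) has_real_derivative D) (at 0)" by auto
  have bx: "be x > 0" using add by auto
  have "((\<lambda>t. xlx (al x * t + be x)) has_real_derivative (ln (al x * 0 + be x) + 1) * (al x * 1 + 0)) (at 0)"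
    unfolding xlx_def
    apply (rule DERIV_chain2[where f="\<lambda>y. y * ln y"])
     apply (rule derivative_eq_intros | use bx in simp)+
    done
  from DERIV_add[OF this D] show ?case by (auto simp: add.commute)
qed

lemma core:
  fixes P Q :: "'a set multiset" and A :: "'a set"
  assumes fin: "\<forall>B\<in>#P+Q. finite B" and AP: "A \<in># P" and AQ: "A \<notin># Q"
    and Ane: "A \<noteq> {}" and Afin: "finite A"
    and nosub: "\<forall>B\<in>#P+Q. B \<noteq> A \<longrightarrow> \<not> B \<subseteq> A"
    and eq: "\<And>w. (\<forall>x. w x > 0) \<Longrightarrow> (\<Sum>B\<in>#P. xlx (\<Sum>x\<in>B. w x)) = (\<Sum>B\<in>#Q. xlx (\<Sum>x\<in>B. w x))"
  shows False
proof -
  define m where "m = count P A"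
  have m1: "m \<ge> 1" using AP by (simp add: m_def)
  define R where "R = filter_mset (\<lambda>B. B \<noteq> A) P"
  have PR: "P = replicate_mset m A + R"
    by (auto simp: multiset_eq_iff R_def m_def)
  define al where "al B = real (card (B \<inter> A))" for B
  define be where "be B = real (card (B - A))" for B
  define k where "k = real (card A)"
  have k0: "k > 0" using Ane Afin by (simp add: k_def card_gt_0_iff)
  have sumw: "(\<Sum>x\<in>B. (if x \<in> A then t else 1)) = al B * t + be B" if "finite B" for B and t :: real
  proof -
    have "(\<Sum>x\<in>B. (if x \<in> A then t else 1)) = (\<Sum>x\<in>B \<inter> A. t) + (\<Sum>x\<in>B - A. 1)"
      using that by (simp add: sum.If_cases Int_def Diff_eq)
    then show ?thesis by (simp add: al_def be_def)
  qed
  have beA: "be B > 0" if "B \<in># P + Q" "B \<noteq> A" for B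
  proof -
    have "B - A \<noteq> {}" using nosub that by auto
    moreover have "finite B" using fin that by auto
    ultimately show ?thesis by (simp add: be_def card_gt_0_iff)
  qed
  have beR: "\<forall>B\<in>#R. be B > 0" using beA by (auto simp: R_def)
  have beQ: "\<forall>B\<in>#Q. be B > 0" using beA AQ by auto
  define F where "F t = (\<Sum>B\<in>#Q. xlx (al B * t + be B)) - (\<Sum>B\<in>#R. xlx (al B * t + be B))" for t
  obtain D1 where D1: "((\<lambda>t. \<Sum>B\<in>#Q. xlx (al B * t + be B)) has_real_derivative D1) (at 0)"
    using deriv_msum[OF beQ] by blast
  obtain D2 where D2: "((\<lambda>t. \<Sum>B\<in>#R. xlx (al B * t + be B)) has_real_derivative D2) (at 0)"
    using deriv_msum[OF beR] by blast
  have DF: "(F has_real_derivative (D1 - D2)) (at 0)"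
    unfolding F_def using DERIV_diff[OF D1 D2] .
  have Ft: "F t = m * xlx (k * t)" if "t > 0" for t
  proof -
    let ?w = "\<lambda>x. if x \<in> A then t else 1"
    have "\<forall>x. ?w x > 0" using that by auto
    from eq[OF this] have e: "(\<Sum>B\<in>#P. xlx (\<Sum>x\<in>B. ?w x)) = (\<Sum>B\<in>#Q. xlx (\<Sum>x\<in>B. ?w x))" .
    have "(\<Sum>B\<in>#P. xlx (\<Sum>x\<in>B. ?w x)) = (\<Sum>B\<in>#P. xlx (al B * t + be B))"
      using fin sumw by (intro arg_cong[where f=sum_mset] image_mset_cong) auto
    moreover have "(\<Sum>B\<in>#Q. xlx (\<Sum>x\<in>B. ?w x)) = (\<Sum>B\<in>#Q. xlx (al B * t + be B))"
      using fin sumw by (intro arg_cong[where f=sum_mset] image_mset_cong) auto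
    moreover have "al A * t + be A = k * t" by (simp add: al_def be_def k_def)
    ultimately have "m * xlx (k * t) + (\<Sum>B\<in>#R. xlx (al B * t + be B)) = (\<Sum>B\<in>#Q. xlx (al B * t + be B))"
      using e unfolding PR by simp
    then show ?thesis unfolding F_def by simp
  qed
  have ev: "eventually (\<lambda>t. t > 0) (at_right (0::real))" by (simp add: eventually_at_right_less)
  have c1: "(F \<longlongrightarrow> F 0) (at_right 0)"
    using DERIV_isCont[OF DF] by (simp add: isCont_def filterlim_at_split)
  have c2: "(F \<longlongrightarrow> 0) (at_right 0)"
  proof -
    have "((\<lambda>t. m * xlx (k * t)) \<longlongrightarrow> 0) (at_right 0)" using lim1[OF k0] .
    then show ?thesis
      by (rule Lim_transform_eventually) (use ev Ft in \<open>auto elim: eventually_mono\<close>)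
  qed
  have F0: "F 0 = 0" using tendsto_unique[OF _ c1 c2] by simp
  have q1: "((\<lambda>h. F h / h) \<longlongrightarrow> D1 - D2) (at_right 0)"
  proof -
    have "((\<lambda>h. (F (0 + h) - F 0) / h) \<longlongrightarrow> D1 - D2) (at 0)" using DF by (simp add: DERIV_def)
    then have "((\<lambda>h. F h / h) \<longlongrightarrow> D1 - D2) (at 0)" using F0 by simp
    then show ?thesis by (simp add: filterlim_at_split)
  qed
  have q2: "filterlim (\<lambda>h. F h / h) at_bot (at_right 0)"
  proof -
    have "filterlim (\<lambda>t. m * k * ln (k * t)) at_bot (at_right 0)"
      using lim2[OF k0, of "real m"] m1 by simp
    moreover have e2: "eventually (\<lambda>t. m * k * ln (k * t) = F t / t) (at_right 0)"
      using ev by (rule eventually_mono) (simp add: Ft xlx_def)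
    ultimately show ?thesis using filterlim_cong[OF refl refl e2] by simp
  qed
  have "eventually (\<lambda>h. F h / h > D1 - D2 - 1) (at_right 0)"
    using q1 by (rule order_tendstoD) simp
  moreover have "eventually (\<lambda>h. F h / h \<le> D1 - D2 - 2) (at_right 0)"
    using q2 by (simp add: filterlim_at_bot)
  ultimately have "eventually (\<lambda>h. False) (at_right (0::real))"
    by (rule eventually_elim2) simp
  then show False by simp
qed

lemma mset_xlx_eq:
  fixes P Q :: "'a set multiset"
  assumes fin: "\<forall>B\<in>#P+Q. finite B \<and> B \<noteq> {}"
    and eq: "\<And>w. (\<forall>x. w x > 0) \<Longrightarrow> (\<Sum>B\<in>#P. xlx (\<Sum>x\<in>B. w x)) = (\<Sum>B\<in>#Q. xlx (\<Sum>x\<in>B. w x))"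
  shows "P = Q"
proof (rule ccontr)
  assume ne: "P \<noteq> Q"
  define P' where "P' = P - Q"
  define Q' where "Q' = Q - P"
  define I where "I = P \<inter># Q"
  have PI: "P = P' + I" by (auto simp: multiset_eq_iff P'_def I_def)
  have QI: "Q = Q' + I" by (auto simp: multiset_eq_iff Q'_def I_def)
  have eq': "(\<Sum>B\<in>#P'. xlx (\<Sum>x\<in>B. w x)) = (\<Sum>B\<in>#Q'. xlx (\<Sum>x\<in>B. w x))" if "\<forall>x. w x > 0" for w
    using eq[OF that] unfolding PI QI by simp
  have sub: "P' + Q' \<subseteq># P + Q" unfolding P'_def Q'_def
    by (simp add: subset_mset.add_mono)
  have fin': "\<forall>B\<in>#P'+Q'. finite B \<and> B \<noteq> {}" using fin mset_subset_eqD[OF sub] by blast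
  have nz: "P' + Q' \<noteq> {#}"
  proof
    assume "P' + Q' = {#}"
    then have "P' = {#}" "Q' = {#}" by auto
    then show False using ne PI QI by simp
  qed
  define K where "K = card ` set_mset (P' + Q')"
  have Kfin: "finite K" "K \<noteq> {}" using nz by (auto simp: K_def)
  then have "Min K \<in> K" by simp
  then obtain A where A: "A \<in># P' + Q'" "card A = Min K" unfolding K_def by (metis imageE)
  have minc: "card A \<le> card B" if "B \<in># P' + Q'" for B
    using A(2) Kfin that by (auto simp: K_def)
  have Afin: "finite A" "A \<noteq> {}" using fin' A(1) by auto
  have nosub: "\<forall>B\<in>#P'+Q'. B \<noteq> A \<longrightarrow> \<not> B \<subseteq> A"
  proof (intro ballI impI notI)
    fix B assume B: "B \<in># P' + Q'" "B \<noteq> A" "B \<subseteq> A"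
    then have "card B < card A" using Afin by (intro psubset_card_mono) auto
    with minc[OF B(1)] show False by simp
  qed
  have finB: "\<forall>B\<in>#P'+Q'. finite B" using fin' by blast
  show False
  proof (cases "A \<in># P'")
    case True
    then have "A \<notin># Q'" by (auto simp: P'_def Q'_def in_diff_count)
    from core[OF finB True this Afin(2) Afin(1) nosub eq'] show False .
  next
    case False
    then have AQ: "A \<in># Q'" using A(1) by auto
    have nP: "A \<notin># P'" using False .
    have finB2: "\<forall>B\<in>#Q'+P'. finite B" using finB by (simp add: add.commute)
    have nosub2: "\<forall>B\<in>#Q'+P'. B \<noteq> A \<longrightarrow> \<not> B \<subseteq> A" using nosub by (simp add: add.commute)
    from core[OF finB2 AQ nP Afin(2) Afin(1) nosub2 eq'[symmetric]] show False .
  qed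
qed



definition Rl :: "nat list \<Rightarrow> nat list set" where
  "Rl ss = {t. length t = length ss \<and> (\<forall>i<length ss. t ! i < ss ! i)}"

lemma Rl_Cons: "Rl (a # ss) = (\<lambda>(x, t). x # t) ` ({0..<a} \<times> Rl ss)"
proof (intro set_eqI iffI)
  fix t assume "t \<in> Rl (a # ss)"
  then obtain x t' where t: "t = x # t'" "length t' = length ss" and b: "\<forall>i<Suc (length ss). t ! i < (a # ss) ! i"
    by (auto simp: Rl_def length_Suc_conv)
  have "x < a" using b[rule_format, of 0] t by simp
  moreover have "\<forall>i<length ss. t' ! i < ss ! i" using b t by auto
  ultimately show "t \<in> (\<lambda>(x, t). x # t) ` ({0..<a} \<times> Rl ss)" using t by (auto simp: Rl_def)
next
  fix t assume "t \<in> (\<lambda>(x, t). x # t) ` ({0..<a} \<times> Rl ss)"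
  then show "t \<in> Rl (a # ss)" by (auto simp: Rl_def less_Suc_eq_0_disj)
qed

lemma Rl_finite_card: "finite (Rl ss) \<and> card (Rl ss) = prod_list ss"
proof (induction ss)
  case Nil
  have "Rl [] = {[]}" by (auto simp: Rl_def)
  then show ?case by simp
next
  case (Cons a ss)
  have inj: "inj_on (\<lambda>(x, t). x # t) ({0..<a} \<times> Rl ss)" by (auto simp: inj_on_def)
  show ?case unfolding Rl_Cons using Cons inj by (simp add: card_image card_cartesian_product)
qed

lemma Rl_fiber:
  assumes "s \<in> Rl (take L ss)" "L \<le> length ss"
  shows "{l \<in> Rl ss. take L l = s} = (\<lambda>t. s @ t) ` Rl (drop L ss)"
proof (intro set_eqI iffI)
  fix l assume l: "l \<in> {l \<in> Rl ss. take L l = s}"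
  then have "l = s @ drop L l" by (metis (mono_tags) append_take_drop_id mem_Collect_eq)
  moreover have "drop L l \<in> Rl (drop L ss)" using l assms by (auto simp: Rl_def)
  ultimately show "l \<in> (\<lambda>t. s @ t) ` Rl (drop L ss)" by blast
next
  fix l assume "l \<in> (\<lambda>t. s @ t) ` Rl (drop L ss)"
  then obtain t where l: "l = s @ t" "t \<in> Rl (drop L ss)" by auto
  have ls: "length s = L" using assms by (auto simp: Rl_def)
  have "\<forall>i<length ss. l ! i < ss ! i"
  proof (intro allI impI)
    fix i assume i: "i < length ss"
    show "l ! i < ss ! i"
    proof (cases "i < L")
      case True then show ?thesis using assms l ls by (auto simp: Rl_def nth_append)
    next
      case False
      have "i - L < length ss - L" using i False by simp
      moreover have tb: "\<forall>j<length (drop L ss). t ! j < drop L ss ! j" using l(2) by (simp add: Rl_def)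
      ultimately have "t ! (i - L) < drop L ss ! (i - L)" by simp
      then have "t ! (i - L) < ss ! i" using assms(2) False by simp
      then show ?thesis using False l(1) ls by (simp add: nth_append)
    qed
  qed
  then show "l \<in> {l \<in> Rl ss. take L l = s}" using l ls assms by (auto simp: Rl_def)
qed

lemma card_Rl_fiber:
  assumes "s \<in> Rl (take L ss)" "L \<le> length ss"
  shows "card {l \<in> Rl ss. take L l = s} = prod_list (drop L ss)"
proof -
  have "inj_on (\<lambda>t. s @ t) (Rl (drop L ss))" by (auto simp: inj_on_def)
  then show ?thesis unfolding Rl_fiber[OF assms] using Rl_finite_card by (simp add: card_image)
qed

lemma paths_Rl: "paths T = Rl (sizes T)"
  by (auto simp: paths_def nodes_at_def Rl_def)

lemma nodes_Rl: "L \<le> length (sizes T) \<Longrightarrow> nodes_at T L = Rl (take L (sizes T))"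
  by (auto simp: nodes_at_def Rl_def)

lemma finite_paths: "finite (paths T)" using Rl_finite_card paths_Rl by metis

lemma card_paths: "card (paths T) = prod_list (sizes T)" using Rl_finite_card paths_Rl by metis

lemma situations_nodes: "s \<in> situations T \<longleftrightarrow> length s < length (sizes T) \<and> s \<in> nodes_at T (length s)"
  by (auto simp: situations_def nodes_at_def)

lemma finite_situations: "finite (situations T)"
proof -
  have "situations T \<subseteq> {xs. set xs \<subseteq> {0..<sum_list (sizes T)} \<and> length xs \<le> length (sizes T)}"
  proof
    fix s assume s: "s \<in> situations T"
    have "x < sum_list (sizes T)" if "x \<in> set s" for x
    proof -
      obtain i where i: "i < length s" "s ! i = x" using \<open>x \<in> set s\<close> by (auto simp: in_set_conv_nth)
      then have "s ! i < sizes T ! i" "i < length (sizes T)" using s by (auto simp: situations_def)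
      moreover have "sizes T ! i \<le> sum_list (sizes T)" using calculation(2) by (rule elem_le_sum_list)
      ultimately show ?thesis using i by simp
    qed
    then show "s \<in> {xs. set xs \<subseteq> {0..<sum_list (sizes T)} \<and> length xs \<le> length (sizes T)}"
      using s by (auto simp: situations_def)
  qed
  then show ?thesis by (rule finite_subset) (simp add: finite_lists_length_le)
qed

lemma take_path:
  assumes "l \<in> paths T" "i < length (sizes T)"
  shows "take i l \<in> situations T" "length (take i l) = i" "l ! i < nout T (take i l)"
  using assms by (auto simp: paths_def nodes_at_def situations_def nout_def)

lemma zero_notin_sizes: "staged_tree T \<Longrightarrow> 0 \<notin> set (sizes T)"
proof
  assume "staged_tree T" "0 \<in> set (sizes T)"
  then obtain i where "i < length (sizes T)" "sizes T ! i = 0" by (auto simp: in_set_conv_nth)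
  moreover have "\<forall>i<length (sizes T). sizes T ! i > 0" using \<open>staged_tree T\<close> unfolding staged_tree_def by blast
  ultimately show False by force
qed

lemma prod_list_pos_nat: "0 \<notin> set xs \<Longrightarrow> prod_list xs > (0::nat)"
  by (induction xs) auto

lemma prod_sizes_pos: "staged_tree T \<Longrightarrow> prod_list (drop L (sizes T)) > 0 \<and> prod_list (take L (sizes T)) > 0"
proof -
  assume st: "staged_tree T"
  have "0 \<notin> set (drop L (sizes T))" "0 \<notin> set (take L (sizes T))"
    using zero_notin_sizes[OF st] by (auto dest: in_set_dropD in_set_takeD)
  then show ?thesis using prod_list_pos_nat by blast
qed

lemma card_prefix:
  assumes "finite SS" "SS \<subseteq> nodes_at T L" "L \<le> length (sizes T)"
  shows "card {l \<in> paths T. take L l \<in> SS} = card SS * prod_list (drop L (sizes T))"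
proof -
  let ?A = "{l \<in> paths T. take L l \<in> SS}"
  have fA: "finite ?A" using finite_paths by simp
  have sub: "(\<lambda>l. take L l) ` ?A \<subseteq> SS" by auto
  have g0: "(\<Sum>s\<in>SS. \<Sum>l\<in>{x. x \<in> ?A \<and> take L x = s}. (1::nat)) = (\<Sum>l\<in>?A. 1)"
    by (rule sum.group[OF fA assms(1) sub])
  have g: "(\<Sum>s\<in>SS. card {l \<in> ?A. take L l = s}) = card ?A"
    using g0 by (simp only: card_eq_sum)
  have c: "card {l \<in> ?A. take L l = s} = prod_list (drop L (sizes T))" if s: "s \<in> SS" for s
  proof -
    have e: "{l \<in> ?A. take L l = s} = {l \<in> Rl (sizes T). take L l = s}" using s by (auto simp: paths_Rl)
    have "s \<in> Rl (take L (sizes T))" using s assms nodes_Rl by blast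
    from card_Rl_fiber[OF this assms(3)] show ?thesis by (simp only: e)
  qed
  have "card ?A = (\<Sum>s\<in>SS. prod_list (drop L (sizes T)))"
    unfolding g[symmetric] by (rule sum.cong[OF refl]) (rule c)
  then show ?thesis by (simp only: sum_constant of_nat_id)
qed



lemma st_lab: "staged_tree T \<Longrightarrow> s \<in> situations T \<Longrightarrow> bij_betw (lab T s) {0..<nout T s} {0..<nout T s}"
  unfolding staged_tree_def by blast

definition Tset :: "stree \<Rightarrow> nat \<Rightarrow> nat \<Rightarrow> nat list set" where
  "Tset T L u = {l \<in> paths T. stage T (take L l) = u}"

definition Eset :: "stree \<Rightarrow> nat \<Rightarrow> nat \<Rightarrow> nat \<Rightarrow> nat list set" where
  "Eset T L u k = {l \<in> paths T. stage T (take L l) = u \<and> lab T (take L l) (l ! L) = k}"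

lemma stage_sits_nodes: "stage_sits T L u \<subseteq> nodes_at T L"
  by (auto simp: stage_sits_def situations_def nodes_at_def)

lemma finite_stage_sits: "finite (stage_sits T L u)"
  using finite_situations[of T] by (rule rev_finite_subset) (auto simp: stage_sits_def)

lemma stages_iff: "(L, u) \<in> stages T \<longleftrightarrow> L < length (sizes T) \<and> stage_sits T L u \<noteq> {}"
  by (auto simp: stages_def stage_sits_def situations_def)

lemma finite_stages: "finite (stages T)"
proof -
  have "stages T = (\<lambda>s. (length s, stage T s)) ` situations T" by (auto simp: stages_def)
  then show ?thesis using finite_situations by simp
qed

lemma Tset_eq: "L < length (sizes T) \<Longrightarrow> Tset T L u = {l \<in> paths T. take L l \<in> stage_sits T L u}"
  using take_path by (auto simp: Tset_def stage_sits_def)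

lemma card_Tset:
  assumes "L < length (sizes T)"
  shows "card (Tset T L u) = card (stage_sits T L u) * prod_list (drop L (sizes T))"
  unfolding Tset_eq[OF assms]
  by (rule card_prefix[OF finite_stage_sits stage_sits_nodes]) (use assms in simp)

definition ESS :: "stree \<Rightarrow> nat \<Rightarrow> nat \<Rightarrow> nat \<Rightarrow> nat list set" where
  "ESS T L u k = {v \<in> nodes_at T (Suc L). butlast v \<in> stage_sits T L u \<and> lab T (butlast v) (last v) = k}"

lemma take_Suc_path:
  assumes "l \<in> paths T" "L < length (sizes T)"
  shows "take (Suc L) l = take L l @ [l ! L]"
proof -
  have "L < length l" using assms by (simp add: paths_def nodes_at_def)
  then show ?thesis by (rule take_Suc_conv_app_nth)
qed

lemma Eset_eq:
  assumes "L < length (sizes T)"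
  shows "Eset T L u k = {l \<in> paths T. take (Suc L) l \<in> ESS T L u k}"
proof (intro set_eqI iffI)
  fix l assume l: "l \<in> Eset T L u k"
  then have lp: "l \<in> paths T" by (simp add: Eset_def)
  have tn: "take (Suc L) l \<in> nodes_at T (Suc L)"
    using lp assms by (auto simp: paths_def nodes_at_def)
  have "take L l \<in> stage_sits T L u" using l take_path[OF lp assms] by (auto simp: Eset_def stage_sits_def)
  then show "l \<in> {l \<in> paths T. take (Suc L) l \<in> ESS T L u k}"
    using l lp tn take_Suc_path[OF lp assms] by (auto simp: Eset_def ESS_def)
next
  fix l assume l: "l \<in> {l \<in> paths T. take (Suc L) l \<in> ESS T L u k}"
  then have lp: "l \<in> paths T" by simp
  then show "l \<in> Eset T L u k"
    using l take_Suc_path[OF lp assms] by (auto simp: Eset_def ESS_def stage_sits_def)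
qed

lemma card_ESS:
  assumes st: "staged_tree T" and L: "L < length (sizes T)" and k: "k < sizes T ! L"
  shows "card (ESS T L u k) = card (stage_sits T L u)"
proof -
  have "bij_betw butlast (ESS T L u k) (stage_sits T L u)"
  proof (rule bij_betw_imageI)
    show "inj_on butlast (ESS T L u k)"
    proof (rule inj_onI)
      fix v w assume v: "v \<in> ESS T L u k" and w: "w \<in> ESS T L u k" and e: "butlast v = butlast w"
      let ?s = "butlast v"
      have s: "?s \<in> situations T" "length ?s = L" using v by (auto simp: ESS_def stage_sits_def)
      have nv: "nout T ?s = sizes T ! L" using s by (simp add: nout_def)
      have lv: "length v = Suc L" "length w = Suc L" using v w by (auto simp: ESS_def nodes_at_def)
      have "v ! L < sizes T ! L" "w ! L < sizes T ! L" using v w by (auto simp: ESS_def nodes_at_def)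
      moreover have "last v = v ! L" using lv(1) last_conv_nth[of v] by force
      moreover have "last w = w ! L" using lv(2) last_conv_nth[of w] by force
      ultimately have lvw: "last v < nout T ?s" "last w < nout T ?s" using nv by auto
      have "lab T ?s (last v) = lab T ?s (last w)" using v w e by (simp add: ESS_def)
      moreover have "inj_on (lab T ?s) {0..<nout T ?s}" using st_lab[OF st s(1)] by (simp add: bij_betw_def)
      ultimately have "last v = last w" using lvw by (auto dest: inj_onD)
      moreover have "v \<noteq> []" "w \<noteq> []" using lv by auto
      ultimately show "v = w" using e by (metis append_butlast_last_id)
    qed
  next
    show "butlast ` ESS T L u k = stage_sits T L u"
    proof (intro set_eqI iffI)
      fix s assume "s \<in> butlast ` ESS T L u k" then show "s \<in> stage_sits T L u" by (auto simp: ESS_def)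
    next
      fix s assume s: "s \<in> stage_sits T L u"
      then have ss: "s \<in> situations T" "length s = L" by (auto simp: stage_sits_def)
      have nv: "nout T s = sizes T ! L" using ss by (simp add: nout_def)
      have "k \<in> lab T s ` {0..<nout T s}" using st_lab[OF st ss(1)] k nv by (simp add: bij_betw_def)
      then obtain x where x: "x < sizes T ! L" "lab T s x = k" using nv by auto
      have "s @ [x] \<in> nodes_at T (Suc L)"
        using ss x by (auto simp: nodes_at_def situations_def nth_append less_Suc_eq)
      then have "s @ [x] \<in> ESS T L u k" using s x by (simp add: ESS_def)
      then show "s \<in> butlast ` ESS T L u k" by (metis butlast_snoc image_eqI)
    qed
  qed
  then show ?thesis by (rule bij_betw_same_card)
qed

lemma card_Eset:
  assumes st: "staged_tree T" and L: "L < length (sizes T)" and k: "k < sizes T ! L"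
  shows "card (Eset T L u k) = card (stage_sits T L u) * prod_list (drop (Suc L) (sizes T))"
proof -
  have fin: "finite (ESS T L u k)"
    by (rule finite_subset[of _ "butlast -` stage_sits T L u \<inter> nodes_at T (Suc L)"])
       (auto simp: ESS_def nodes_Rl L Suc_le_eq Rl_finite_card)
  have sub: "ESS T L u k \<subseteq> nodes_at T (Suc L)" by (auto simp: ESS_def)
  have "card {l \<in> paths T. take (Suc L) l \<in> ESS T L u k} = card (ESS T L u k) * prod_list (drop (Suc L) (sizes T))"
    using card_prefix[OF fin sub] L by (simp add: Suc_le_eq)
  then show ?thesis using card_ESS[OF assms] Eset_eq[OF L] by simp
qed

lemma prod_take_Suc: "L < length xs \<Longrightarrow> prod_list (take (Suc L) xs) = prod_list (take L xs) * xs ! L"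
  by (simp add: take_Suc_conv_app_nth)

lemma prod_drop_L: "L < length xs \<Longrightarrow> prod_list (drop L xs) = xs ! L * prod_list (drop (Suc L) xs)"
  by (metis Cons_nth_drop_Suc prod_list.Cons)

lemma butlast_sit:
  assumes "s \<in> situations T" "length s = Suc L"
  shows "butlast s \<in> situations T" "length (butlast s) = L"
  using assms by (auto simp: situations_def nth_butlast)

lemma dot_alpha_eq:
  assumes st: "staged_tree T"
  shows "stage_sits T L u \<noteq> {} \<Longrightarrow>
    dot_alpha T a L u = real (card (stage_sits T L u)) * a / real (prod_list (take L (sizes T)))"
proof (induction L arbitrary: u)
  case 0
  have "stage_sits T 0 u \<subseteq> {[]}" by (auto simp: stage_sits_def)
  with 0 have "stage_sits T 0 u = {[]}" by blast
  then show ?case by simp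
next
  case (Suc L)
  obtain s0 where s0: "s0 \<in> stage_sits T (Suc L) u" using Suc.prems by blast
  have Ln: "Suc L < length (sizes T)" using s0 by (auto simp: stage_sits_def situations_def)
  let ?P = "real (prod_list (take L (sizes T)))"
  have trm: "(dot_alpha T a L (stage T (butlast s)) / real (sizes T ! L))
        / real (card (stage_sits T L (stage T (butlast s)))) = a / real (prod_list (take (Suc L) (sizes T)))"
    if s: "s \<in> stage_sits T (Suc L) u" for s
  proof -
    have b: "butlast s \<in> situations T" "length (butlast s) = L"
      using butlast_sit[of s T L] s by (auto simp: stage_sits_def)
    then have bin: "butlast s \<in> stage_sits T L (stage T (butlast s))" by (simp add: stage_sits_def)
    then have ne: "stage_sits T L (stage T (butlast s)) \<noteq> {}" by blast
    have c0: "real (card (stage_sits T L (stage T (butlast s)))) > 0"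
      using ne finite_stage_sits by (simp add: card_gt_0_iff)
    have szL: "real (sizes T ! L) > 0" using prod_sizes_pos[OF st, of L] Ln
      by (metis Suc_lessD gr0I of_nat_0_less_iff prod_drop_L mult_is_0 less_irrefl_nat)
    have P0: "?P > 0" using prod_sizes_pos[OF st, of L] by simp
    show ?thesis unfolding Suc.IH[OF ne] prod_take_Suc[OF Suc_lessD[OF Ln]]
      using c0 szL P0 by (simp add: field_simps)
  qed
  have "dot_alpha T a (Suc L) u = (\<Sum>s\<in>stage_sits T (Suc L) u. (dot_alpha T a L (stage T (butlast s)) / real (sizes T ! L))
        / real (card (stage_sits T L (stage T (butlast s)))))"
    by (simp only: dot_alpha.simps)
  also have "\<dots> = (\<Sum>s\<in>stage_sits T (Suc L) u. a / real (prod_list (take (Suc L) (sizes T))))"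
    by (rule sum.cong[OF refl]) (rule trm)
  also have "\<dots> = real (card (stage_sits T (Suc L) u)) * a / real (prod_list (take (Suc L) (sizes T)))"
    by simp
  finally show ?case .
qed

lemma ad_Tset:
  assumes st: "staged_tree T" and S: "(L, u) \<in> stages T"
  shows "dot_alpha T a L u = a / real (card (paths T)) * real (card (Tset T L u))"
proof -
  have L: "L < length (sizes T)" and ne: "stage_sits T L u \<noteq> {}" using S by (auto simp: stages_iff)
  have cp: "card (paths T) = prod_list (take L (sizes T)) * prod_list (drop L (sizes T))"
    by (metis card_paths append_take_drop_id prod_list.append)
  have p1: "real (prod_list (take L (sizes T))) > 0" "real (prod_list (drop L (sizes T))) > 0"
    using prod_sizes_pos[OF st, of L] by auto
  show ?thesis unfolding dot_alpha_eq[OF st ne] card_Tset[OF L] cp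
    using p1 by (simp add: field_simps)
qed

lemma ad_Eset:
  assumes st: "staged_tree T" and S: "(L, u) \<in> stages T" and k: "k < sizes T ! L"
  shows "dot_alpha T a L u / real (sizes T ! L) = a / real (card (paths T)) * real (card (Eset T L u k))"
proof -
  have L: "L < length (sizes T)" and ne: "stage_sits T L u \<noteq> {}" using S by (auto simp: stages_iff)
  have cp: "card (paths T) = prod_list (take L (sizes T)) * (sizes T ! L * prod_list (drop (Suc L) (sizes T)))"
    by (metis card_paths append_take_drop_id prod_list.append prod_drop_L[OF L])
  have p1: "real (prod_list (take L (sizes T))) > 0" "real (prod_list (drop (Suc L) (sizes T))) > 0"
    using prod_sizes_pos[OF st, of L] prod_sizes_pos[OF st, of "Suc L"] by auto
  have p2: "real (sizes T ! L) > 0" using k by simp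
  show ?thesis unfolding dot_alpha_eq[OF st ne] card_Eset[OF st L k] cp
    using p1 p2 by (simp add: field_simps)
qed

lemma Tset_partition:
  fixes w :: "nat list \<Rightarrow> 'b::comm_monoid_add"
  assumes st: "staged_tree T" and L: "L < length (sizes T)"
  shows "(\<Sum>k<sizes T ! L. \<Sum>l\<in>Eset T L u k. w l) = (\<Sum>l\<in>Tset T L u. w l)"
proof -
  have fin: "finite (Tset T L u)" using finite_paths by (simp add: Tset_def)
  have sub: "(\<lambda>l. lab T (take L l) (l ! L)) ` Tset T L u \<subseteq> {..<sizes T ! L}"
  proof
    fix y assume "y \<in> (\<lambda>l. lab T (take L l) (l ! L)) ` Tset T L u"
    then obtain l where l: "l \<in> paths T" "y = lab T (take L l) (l ! L)" by (auto simp: Tset_def)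
    note tp = take_path[OF l(1) L]
    have "nout T (take L l) = sizes T ! L" using tp by (simp add: nout_def)
    moreover have "lab T (take L l) ` {0..<nout T (take L l)} = {0..<nout T (take L l)}"
      using st_lab[OF st tp(1)] by (simp add: bij_betw_def)
    ultimately show "y \<in> {..<sizes T ! L}" using tp(3) l(2) by auto
  qed
  have "(\<Sum>k<sizes T ! L. \<Sum>l\<in>{x. x \<in> Tset T L u \<and> lab T (take L x) (x ! L) = k}. w l) = (\<Sum>l\<in>Tset T L u. w l)"
    by (rule sum.group[OF fin _ sub]) simp
  moreover have "{x. x \<in> Tset T L u \<and> lab T (take L x) (x ! L) = k} = Eset T L u k" for k
    by (auto simp: Tset_def Eset_def)
  ultimately show ?thesis by simp
qed

lemma sets_nonempty:
  assumes st: "staged_tree T" and S: "(L, u) \<in> stages T"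
  shows "Tset T L u \<noteq> {}" "k < sizes T ! L \<Longrightarrow> Eset T L u k \<noteq> {}"
proof -
  have L: "L < length (sizes T)" and ne: "stage_sits T L u \<noteq> {}" using S by (auto simp: stages_iff)
  have c: "card (stage_sits T L u) > 0" using ne finite_stage_sits by (simp add: card_gt_0_iff)
  show "Tset T L u \<noteq> {}"
    using card_Tset[OF L] c prod_sizes_pos[OF st, of L] by (metis card.empty mult_is_0 neq0_conv)
  show "Eset T L u k \<noteq> {}" if k: "k < sizes T ! L"
    using card_Eset[OF st L k] c prod_sizes_pos[OF st, of "Suc L"] by (metis card.empty mult_is_0 neq0_conv)
qed



definition GT :: "stree \<Rightarrow> (nat list \<Rightarrow> real) \<Rightarrow> real" where
  "GT T w = (\<Sum>(L, u)\<in>stages T. (\<Sum>k<sizes T ! L. xlx (\<Sum>l\<in>Eset T L u k. w l)) - xlx (\<Sum>l\<in>Tset T L u. w l))"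

lemma stages_Sigma: "stages T = Sigma {..<length (sizes T)} (\<lambda>i. {u. (i, u) \<in> stages T})"
  by (auto simp: stages_iff)

lemma nlog: "(a::real) > 0 \<Longrightarrow> N > 0 \<Longrightarrow> a * ln (a / N) = xlx a - a * ln N"
  by (simp add: xlx_def ln_div right_diff_distrib)

lemma regroup:
  fixes \<theta> :: "nat \<Rightarrow> nat \<Rightarrow> real" and w :: "nat list \<Rightarrow> real"
  assumes st: "staged_tree T"
    and pos: "\<forall>s\<in>situations T. \<forall>k<nout T s. \<theta> (stage T s) k > 0"
  shows "(\<Sum>l\<in>paths T. w l * ln (\<Prod>i<length (sizes T). \<theta> (stage T (take i l)) (lab T (take i l) (l ! i))))
       = (\<Sum>(L, u)\<in>stages T. \<Sum>k<sizes T ! L. (\<Sum>l\<in>Eset T L u k. w l) * ln (\<theta> u k))"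
proof -
  let ?n = "length (sizes T)"
  let ?g = "\<lambda>i l. (stage T (take i l), lab T (take i l) (l ! i))"
  define U where "U i = {u. (i, u) \<in> stages T}" for i
  have Ufin: "finite (U i)" for i
  proof -
    have "U i \<subseteq> snd ` stages T" by (force simp: U_def)
    then show ?thesis using finite_subset finite_imageI[OF finite_stages] by blast
  qed
  have lab_lt: "lab T (take i l) (l ! i) < sizes T ! i" if "l \<in> paths T" "i < ?n" for l i
  proof -
    note tp = take_path[OF that]
    have "nout T (take i l) = sizes T ! i" using tp by (simp add: nout_def)
    moreover have "lab T (take i l) ` {0..<nout T (take i l)} = {0..<nout T (take i l)}"
      using st_lab[OF st tp(1)] by (simp add: bij_betw_def)
    ultimately show ?thesis using tp(3) by auto
  qed
  have thpos: "\<theta> (stage T (take i l)) (lab T (take i l) (l ! i)) > 0" if "l \<in> paths T" "i < ?n" for l i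
  proof -
    note tp = take_path[OF that]
    have "nout T (take i l) = sizes T ! i" using tp by (simp add: nout_def)
    then show ?thesis using pos tp lab_lt[OF that] by auto
  qed
  have s1: "(\<Sum>l\<in>paths T. w l * ln (\<Prod>i<?n. \<theta> (stage T (take i l)) (lab T (take i l) (l ! i))))
      = (\<Sum>i<?n. \<Sum>l\<in>paths T. w l * ln (\<theta> (stage T (take i l)) (lab T (take i l) (l ! i))))"
  proof -
    have "(\<Sum>l\<in>paths T. w l * ln (\<Prod>i<?n. \<theta> (stage T (take i l)) (lab T (take i l) (l ! i))))
       = (\<Sum>l\<in>paths T. \<Sum>i<?n. w l * ln (\<theta> (stage T (take i l)) (lab T (take i l) (l ! i))))"
    proof (rule sum.cong[OF refl])
      fix l assume l: "l \<in> paths T"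
      have "ln (\<Prod>i<?n. \<theta> (stage T (take i l)) (lab T (take i l) (l ! i)))
          = (\<Sum>i<?n. ln (\<theta> (stage T (take i l)) (lab T (take i l) (l ! i))))"
        by (rule ln_prod) (simp, metis thpos[OF l] lessThan_iff less_irrefl)
      then show "w l * ln (\<Prod>i<?n. \<theta> (stage T (take i l)) (lab T (take i l) (l ! i)))
          = (\<Sum>i<?n. w l * ln (\<theta> (stage T (take i l)) (lab T (take i l) (l ! i))))"
        by (simp add: sum_distrib_left)
    qed
    also have "\<dots> = (\<Sum>i<?n. \<Sum>l\<in>paths T. w l * ln (\<theta> (stage T (take i l)) (lab T (take i l) (l ! i))))"
      by (rule sum.swap)
    finally show ?thesis .
  qed
  have s2: "(\<Sum>l\<in>paths T. w l * ln (\<theta> (stage T (take i l)) (lab T (take i l) (l ! i))))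
      = (\<Sum>u\<in>U i. \<Sum>k<sizes T ! i. (\<Sum>l\<in>Eset T i u k. w l) * ln (\<theta> u k))" if i: "i < ?n" for i
  proof -
    have sub: "?g i ` paths T \<subseteq> U i \<times> {..<sizes T ! i}"
    proof
      fix y assume "y \<in> ?g i ` paths T"
      then obtain l where l: "l \<in> paths T" "y = ?g i l" by auto
      note tp = take_path[OF l(1) i]
      have "(i, stage T (take i l)) \<in> stages T" using tp unfolding stages_def by (metis (mono_tags, lifting) mem_Collect_eq)
      then show "y \<in> U i \<times> {..<sizes T ! i}" using l lab_lt[OF l(1) i] by (auto simp: U_def)
    qed
    have fY: "finite (U i \<times> {..<sizes T ! i})" using Ufin by simp
    have "(\<Sum>l\<in>paths T. w l * ln (\<theta> (stage T (take i l)) (lab T (take i l) (l ! i))))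
        = (\<Sum>y\<in>U i \<times> {..<sizes T ! i}. \<Sum>l\<in>{x. x \<in> paths T \<and> ?g i x = y}. w l * ln (\<theta> (stage T (take i l)) (lab T (take i l) (l ! i))))"
      by (rule sum.group[OF finite_paths fY sub, symmetric])
    also have "\<dots> = (\<Sum>y\<in>U i \<times> {..<sizes T ! i}. (\<Sum>l\<in>Eset T i (fst y) (snd y). w l) * ln (\<theta> (fst y) (snd y)))"
    proof (rule sum.cong[OF refl])
      fix y :: "nat \<times> nat"
      have e: "{x. x \<in> paths T \<and> ?g i x = y} = Eset T i (fst y) (snd y)"
        by (cases y) (auto simp: Eset_def)
      have "(\<Sum>l\<in>{x. x \<in> paths T \<and> ?g i x = y}. w l * ln (\<theta> (stage T (take i l)) (lab T (take i l) (l ! i))))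
          = (\<Sum>l\<in>{x. x \<in> paths T \<and> ?g i x = y}. w l * ln (\<theta> (fst y) (snd y)))"
        by (rule sum.cong[OF refl]) auto
      then show "(\<Sum>l\<in>{x. x \<in> paths T \<and> ?g i x = y}. w l * ln (\<theta> (stage T (take i l)) (lab T (take i l) (l ! i))))
          = (\<Sum>l\<in>Eset T i (fst y) (snd y). w l) * ln (\<theta> (fst y) (snd y))"
        by (simp add: e sum_distrib_right)
    qed
    also have "\<dots> = (\<Sum>u\<in>U i. \<Sum>k<sizes T ! i. (\<Sum>l\<in>Eset T i u k. w l) * ln (\<theta> u k))"
      by (simp add: sum.cartesian_product split_beta)
    finally show ?thesis .
  qed
  have "(\<Sum>i<?n. \<Sum>l\<in>paths T. w l * ln (\<theta> (stage T (take i l)) (lab T (take i l) (l ! i))))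
      = (\<Sum>i<?n. \<Sum>u\<in>U i. \<Sum>k<sizes T ! i. (\<Sum>l\<in>Eset T i u k. w l) * ln (\<theta> u k))"
    by (rule sum.cong[OF refl]) (simp add: s2)
  also have "\<dots> = (\<Sum>(L, u)\<in>Sigma {..<?n} U. \<Sum>k<sizes T ! L. (\<Sum>l\<in>Eset T L u k. w l) * ln (\<theta> u k))"
    by (rule sum.Sigma) (auto simp: Ufin)
  also have "Sigma {..<?n} U = stages T" unfolding U_def by (rule stages_Sigma[symmetric])
  finally show ?thesis using s1 by simp
qed

lemma gibbs:
  fixes n \<theta> :: "nat \<Rightarrow> real"
  assumes fin: "finite K" and np: "\<forall>k\<in>K. n k > 0" and tp: "\<forall>k\<in>K. \<theta> k > 0" and s1: "(\<Sum>k\<in>K. \<theta> k) = 1"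
  shows "(\<Sum>k\<in>K. n k * ln (\<theta> k)) \<le> (\<Sum>k\<in>K. xlx (n k)) - xlx (\<Sum>k\<in>K. n k)"
proof -
  let ?N = "\<Sum>k\<in>K. n k"
  have Kne: "K \<noteq> {}" using s1 by auto
  have N0: "?N > 0" using fin Kne np by (intro sum_pos) auto
  have "(\<Sum>k\<in>K. n k * ln (\<theta> k)) - (\<Sum>k\<in>K. n k * ln (n k / ?N)) = (\<Sum>k\<in>K. n k * ln (\<theta> k * ?N / n k))"
  proof -
    have "n k * ln (\<theta> k) - n k * ln (n k / ?N) = n k * ln (\<theta> k * ?N / n k)" if "k \<in> K" for k
    proof -
      have p: "n k > 0" "\<theta> k > 0" using np tp that by auto
      have a: "ln (\<theta> k * ?N / n k) = ln (\<theta> k) + ln ?N - ln (n k)" using p N0 by (simp add: ln_div ln_mult)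
      have b: "ln (n k / ?N) = ln (n k) - ln ?N" using p N0 by (simp add: ln_div)
      show ?thesis by (simp add: a b algebra_simps)
    qed
    then show ?thesis by (simp add: sum_subtractf[symmetric])
  qed
  also have "\<dots> \<le> (\<Sum>k\<in>K. n k * (\<theta> k * ?N / n k - 1))"
  proof (rule sum_mono)
    fix k assume k: "k \<in> K"
    have "ln (\<theta> k * ?N / n k) \<le> \<theta> k * ?N / n k - 1" using np tp k N0 by (intro ln_le_minus_one) simp
    then show "n k * ln (\<theta> k * ?N / n k) \<le> n k * (\<theta> k * ?N / n k - 1)" using np k by (simp add: mult_left_mono)
  qed
  also have "\<dots> = (\<Sum>k\<in>K. \<theta> k * ?N - n k)"
  proof (rule sum.cong[OF refl])
    fix k assume "k \<in> K"
    then have "n k \<noteq> 0" using np by auto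
    then show "n k * (\<theta> k * ?N / n k - 1) = \<theta> k * ?N - n k" by (simp add: field_simps)
  qed
  also have "\<dots> = 0" using s1 by (simp add: sum_subtractf sum_distrib_right[symmetric])
  finally have a: "(\<Sum>k\<in>K. n k * ln (\<theta> k)) \<le> (\<Sum>k\<in>K. n k * ln (n k / ?N))" by simp
  have "(\<Sum>k\<in>K. n k * ln (n k / ?N)) = (\<Sum>k\<in>K. xlx (n k) - n k * ln ?N)"
    by (rule sum.cong[OF refl]) (use np N0 nlog in auto)
  also have "\<dots> = (\<Sum>k\<in>K. xlx (n k)) - xlx ?N"
    by (simp add: sum_subtractf xlx_def sum_distrib_right)
  finally show ?thesis using a by simp
qed

lemma gibbs_eq:
  fixes n :: "nat \<Rightarrow> real"
  assumes fin: "finite K" and np: "\<forall>k\<in>K. n k > 0" and N: "N = (\<Sum>k\<in>K. n k)"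
  shows "(\<Sum>k\<in>K. n k * ln (n k / N)) = (\<Sum>k\<in>K. xlx (n k)) - xlx N"
proof (cases "K = {}")
  case True then show ?thesis using N by (simp add: xlx_def)
next
  case False
  have N0: "N > 0" unfolding N using fin False np by (intro sum_pos) auto
  have "(\<Sum>k\<in>K. n k * ln (n k / N)) = (\<Sum>k\<in>K. xlx (n k) - n k * ln N)"
    by (rule sum.cong[OF refl]) (use np N0 nlog in auto)
  also have "\<dots> = (\<Sum>k\<in>K. xlx (n k)) - xlx N"
    by (simp add: sum_subtractf xlx_def sum_distrib_right N)
  finally show ?thesis .
qed

lemma stage_cnt_pos:
  fixes w :: "nat list \<Rightarrow> real"
  assumes st: "staged_tree T" and S: "(L, u) \<in> stages T" and wpos: "\<forall>l. w l > 0"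
  shows "k < sizes T ! L \<Longrightarrow> (\<Sum>l\<in>Eset T L u k. w l) > 0" "(\<Sum>l\<in>Tset T L u. w l) > 0"
proof -
  have fE: "finite (Eset T L u k)" "finite (Tset T L u)" using finite_paths by (auto simp: Eset_def Tset_def)
  show "(\<Sum>l\<in>Eset T L u k. w l) > 0" if "k < sizes T ! L"
    using sets_nonempty(2)[OF st S that] fE wpos by (intro sum_pos) auto
  show "(\<Sum>l\<in>Tset T L u. w l) > 0"
    using sets_nonempty(1)[OF st S] fE wpos by (intro sum_pos) auto
qed

lemma stage_bound:
  fixes w :: "nat list \<Rightarrow> real" and \<theta> :: "nat \<Rightarrow> nat \<Rightarrow> real"
  assumes st: "staged_tree T" and S: "(L, u) \<in> stages T" and wpos: "\<forall>l. w l > 0"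
    and th: "\<forall>s\<in>situations T. (\<forall>k<nout T s. \<theta> (stage T s) k > 0) \<and> (\<Sum>k<nout T s. \<theta> (stage T s) k) = 1"
  shows "(\<Sum>k<sizes T ! L. (\<Sum>l\<in>Eset T L u k. w l) * ln (\<theta> u k))
     \<le> (\<Sum>k<sizes T ! L. xlx (\<Sum>l\<in>Eset T L u k. w l)) - xlx (\<Sum>l\<in>Tset T L u. w l)"
proof -
  have L: "L < length (sizes T)" and ne: "stage_sits T L u \<noteq> {}" using S by (auto simp: stages_iff)
  obtain s where s: "s \<in> stage_sits T L u" using ne by blast
  have ss: "s \<in> situations T" "length s = L" "stage T s = u" using s by (auto simp: stage_sits_def)
  have nv: "nout T s = sizes T ! L" using ss by (simp add: nout_def)
  have tp: "\<forall>k\<in>{..<sizes T ! L}. \<theta> u k > 0" and t1: "(\<Sum>k<sizes T ! L. \<theta> u k) = 1"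
    using th ss nv by auto
  have np: "\<forall>k\<in>{..<sizes T ! L}. (\<Sum>l\<in>Eset T L u k. w l) > 0"
    using stage_cnt_pos(1)[OF st S wpos] by auto
  have "(\<Sum>k<sizes T ! L. (\<Sum>l\<in>Eset T L u k. w l) * ln (\<theta> u k))
     \<le> (\<Sum>k<sizes T ! L. xlx (\<Sum>l\<in>Eset T L u k. w l)) - xlx (\<Sum>k<sizes T ! L. \<Sum>l\<in>Eset T L u k. w l)"
    by (rule gibbs[OF _ np tp t1]) simp
  then show ?thesis using Tset_partition[OF st L, where u=u and w=w] by simp
qed

lemma MLE_upper:
  fixes w :: "nat list \<Rightarrow> real"
  assumes st: "staged_tree T" and p: "p \<in> model T" and wpos: "\<forall>l. w l > 0"
  shows "(\<Sum>l\<in>paths T. w l * ln (p l)) \<le> GT T w"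
proof -
  from p obtain \<theta> :: "nat \<Rightarrow> nat \<Rightarrow> real" where
    th: "\<forall>s\<in>situations T. (\<forall>k<nout T s. \<theta> (stage T s) k > 0) \<and> (\<Sum>k<nout T s. \<theta> (stage T s) k) = 1"
    and pe: "p = (\<lambda>l. if l \<in> paths T then
                 (\<Prod>i<length (sizes T). \<theta> (stage T (take i l)) (lab T (take i l) (l ! i))) else undefined)"
    unfolding model_def by blast
  have pos: "\<forall>s\<in>situations T. \<forall>k<nout T s. \<theta> (stage T s) k > 0" using th by blast
  have "(\<Sum>l\<in>paths T. w l * ln (p l))
      = (\<Sum>l\<in>paths T. w l * ln (\<Prod>i<length (sizes T). \<theta> (stage T (take i l)) (lab T (take i l) (l ! i))))"
    by (rule sum.cong[OF refl]) (simp add: pe)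
  also have "\<dots> = (\<Sum>(L, u)\<in>stages T. \<Sum>k<sizes T ! L. (\<Sum>l\<in>Eset T L u k. w l) * ln (\<theta> u k))"
    by (rule regroup[OF st pos])
  also have "\<dots> \<le> GT T w" unfolding GT_def
  proof (rule sum_mono, clarify)
    fix L u assume S: "(L, u) \<in> stages T"
    show "(\<Sum>k<sizes T ! L. (\<Sum>l\<in>Eset T L u k. w l) * ln (\<theta> u k))
     \<le> (\<Sum>k<sizes T ! L. xlx (\<Sum>l\<in>Eset T L u k. w l)) - xlx (\<Sum>l\<in>Tset T L u. w l)"
      by (rule stage_bound[OF st S wpos th])
  qed
  finally show ?thesis .
qed

lemma sum_single_nz:
  fixes F :: "nat \<Rightarrow> real"
  assumes "finite A" "a \<in> A" "\<forall>x\<in>A. x \<noteq> a \<longrightarrow> F x = 0"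
  shows "sum F A = F a"
proof -
  have "sum F A = F a + sum F (A - {a})" using assms by (simp add: sum.remove)
  also have "sum F (A - {a}) = 0" using assms by (intro sum.neutral) auto
  finally show ?thesis by simp
qed

lemma MLE_attain:
  fixes w :: "nat list \<Rightarrow> real"
  assumes st: "staged_tree T" and sl: "single_level_stages T" and wpos: "\<forall>l. w l > 0"
  shows "\<exists>p\<in>model T. (\<Sum>l\<in>paths T. w l * ln (p l)) = GT T w"
proof -
  let ?n = "length (sizes T)"
  define nE where "nE u k = (\<Sum>L<?n. \<Sum>l\<in>Eset T L u k. w l)" for u k
  define nT where "nT u = (\<Sum>L<?n. \<Sum>l\<in>Tset T L u. w l)" for u
  define \<theta> where "\<theta> u k = nE u k / nT u" for u k
  have coll: "nE u k = (\<Sum>l\<in>Eset T L u k. w l) \<and> nT u = (\<Sum>l\<in>Tset T L u. w l)"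
    if S: "(L, u) \<in> stages T" for L u k
  proof -
    have L: "L < ?n" and ne: "stage_sits T L u \<noteq> {}" using S by (auto simp: stages_iff)
    obtain s where s: "s \<in> stage_sits T L u" using ne by blast
    have ss: "s \<in> situations T" "length s = L" "stage T s = u" using s by (auto simp: stage_sits_def)
    have emp: "Tset T L' u = {}" if "L' < ?n" "L' \<noteq> L" for L'
    proof (rule ccontr)
      assume "Tset T L' u \<noteq> {}"
      then obtain l where l: "l \<in> paths T" "stage T (take L' l) = u" by (auto simp: Tset_def)
      note tp = take_path[OF l(1) that(1)]
      have "length (take L' l) = length s"
        using sl tp(1) ss(1) l(2) ss(3) unfolding single_level_stages_def by metis
      then show False using tp(2) ss(2) that(2) by simp
    qed
    have empE: "Eset T L' u k = {}" if "L' < ?n" "L' \<noteq> L" for L'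
      using emp[OF that] by (auto simp: Eset_def Tset_def)
    show ?thesis unfolding nE_def nT_def
      by (intro conjI sum_single_nz) (use L emp empE in auto)
  qed
  have thS: "\<theta> u k = (\<Sum>l\<in>Eset T L u k. w l) / (\<Sum>l\<in>Tset T L u. w l)" if S: "(L, u) \<in> stages T" for L u k
    using coll[OF S] by (simp add: \<theta>_def)
  have th: "\<forall>s\<in>situations T. (\<forall>k<nout T s. \<theta> (stage T s) k > 0) \<and> (\<Sum>k<nout T s. \<theta> (stage T s) k) = 1"
  proof
    fix s assume s: "s \<in> situations T"
    let ?L = "length s" and ?u = "stage T s"
    have S: "(?L, ?u) \<in> stages T" using s by (auto simp: stages_def)
    have nv: "nout T s = sizes T ! ?L" by (simp add: nout_def)
    have p1: "\<forall>k<nout T s. \<theta> ?u k > 0"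
      using stage_cnt_pos[OF st S wpos] thS[OF S] nv by (simp add: divide_pos_pos)
    have "(\<Sum>k<nout T s. \<theta> ?u k) = (\<Sum>k<sizes T ! ?L. \<Sum>l\<in>Eset T ?L ?u k. w l) / (\<Sum>l\<in>Tset T ?L ?u. w l)"
      using thS[OF S] nv by (simp add: sum_divide_distrib)
    also have "\<dots> = 1" using Tset_partition[OF st, where L="?L" and u="?u" and w=w] s stage_cnt_pos(2)[OF st S wpos]
      by (simp add: situations_def)
    finally show "(\<forall>k<nout T s. \<theta> (stage T s) k > 0) \<and> (\<Sum>k<nout T s. \<theta> (stage T s) k) = 1"
      using p1 by simp
  qed
  define p where "p = (\<lambda>l. if l \<in> paths T then
                 (\<Prod>i<?n. \<theta> (stage T (take i l)) (lab T (take i l) (l ! i))) else undefined)"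
  have pm: "p \<in> model T" unfolding model_def p_def using th by blast
  have pos: "\<forall>s\<in>situations T. \<forall>k<nout T s. \<theta> (stage T s) k > 0" using th by blast
  have "(\<Sum>l\<in>paths T. w l * ln (p l))
      = (\<Sum>l\<in>paths T. w l * ln (\<Prod>i<?n. \<theta> (stage T (take i l)) (lab T (take i l) (l ! i))))"
    by (rule sum.cong[OF refl]) (simp add: p_def)
  also have "\<dots> = (\<Sum>(L, u)\<in>stages T. \<Sum>k<sizes T ! L. (\<Sum>l\<in>Eset T L u k. w l) * ln (\<theta> u k))"
    by (rule regroup[OF st pos])
  also have "\<dots> = GT T w" unfolding GT_def
  proof (rule sum.cong[OF refl], clarify)
    fix L u assume S: "(L, u) \<in> stages T"
    have L: "L < ?n" using S by (auto simp: stages_iff)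
    have np: "\<forall>k\<in>{..<sizes T ! L}. (\<Sum>l\<in>Eset T L u k. w l) > 0"
      using stage_cnt_pos(1)[OF st S wpos] by auto
    have "(\<Sum>k<sizes T ! L. (\<Sum>l\<in>Eset T L u k. w l) * ln (\<theta> u k))
        = (\<Sum>k<sizes T ! L. (\<Sum>l\<in>Eset T L u k. w l) * ln ((\<Sum>l\<in>Eset T L u k. w l) / (\<Sum>l\<in>Tset T L u. w l)))"
      using thS[OF S] by simp
    also have "\<dots> = (\<Sum>k<sizes T ! L. xlx (\<Sum>l\<in>Eset T L u k. w l)) - xlx (\<Sum>l\<in>Tset T L u. w l)"
      by (rule gibbs_eq[OF _ np]) (simp_all add: Tset_partition[OF st L])
    finally show "(\<Sum>k<sizes T ! L. (\<Sum>l\<in>Eset T L u k. w l) * ln (\<theta> u k))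
        = (\<Sum>k<sizes T ! L. xlx (\<Sum>l\<in>Eset T L u k. w l)) - xlx (\<Sum>l\<in>Tset T L u. w l)" .
  qed
  finally show ?thesis using pm by blast
qed



definition EM :: "stree \<Rightarrow> nat list set multiset" where
  "EM T = (\<Sum>(L, u)\<in>stages T. image_mset (\<lambda>k. Eset T L u k) (mset_set {..<sizes T ! L}))"

definition TM :: "stree \<Rightarrow> nat list set multiset" where
  "TM T = image_mset (\<lambda>(L, u). Tset T L u) (mset_set (stages T))"

lemma sum_mset_setsum:
  fixes h :: "'a \<Rightarrow> 'c::comm_monoid_add"
  shows "finite X \<Longrightarrow> (\<Sum>A\<in>#(\<Sum>x\<in>X. M x). h A) = (\<Sum>x\<in>X. \<Sum>A\<in>#M x. h A)"
  by (induction X rule: finite_induct) auto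

lemma prod_mset_setsum:
  fixes h :: "'a \<Rightarrow> 'c::comm_monoid_mult"
  shows "finite X \<Longrightarrow> (\<Prod>A\<in>#(\<Sum>x\<in>X. M x). h A) = (\<Prod>x\<in>X. \<Prod>A\<in>#M x. h A)"
  by (induction X rule: finite_induct) auto

lemma sum_EM:
  fixes h :: "nat list set \<Rightarrow> 'c::comm_monoid_add"
  shows "(\<Sum>A\<in>#EM T. h A) = (\<Sum>(L, u)\<in>stages T. \<Sum>k<sizes T ! L. h (Eset T L u k))"
  unfolding EM_def sum_mset_setsum[OF finite_stages]
  by (rule sum.cong[OF refl]) (auto simp: sum_unfold_sum_mset multiset.map_comp comp_def)

lemma prod_EM:
  fixes h :: "nat list set \<Rightarrow> 'c::comm_monoid_mult"
  shows "(\<Prod>A\<in>#EM T. h A) = (\<Prod>(L, u)\<in>stages T. \<Prod>k<sizes T ! L. h (Eset T L u k))"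
  unfolding EM_def prod_mset_setsum[OF finite_stages]
  by (rule prod.cong[OF refl]) (auto simp: prod_unfold_prod_mset multiset.map_comp comp_def)

lemma sum_TM:
  fixes h :: "nat list set \<Rightarrow> 'c::comm_monoid_add"
  shows "(\<Sum>A\<in>#TM T. h A) = (\<Sum>(L, u)\<in>stages T. h (Tset T L u))"
  unfolding TM_def by (simp add: sum_unfold_sum_mset multiset.map_comp comp_def split_beta)

lemma prod_TM:
  fixes h :: "nat list set \<Rightarrow> 'c::comm_monoid_mult"
  shows "(\<Prod>A\<in>#TM T. h A) = (\<Prod>(L, u)\<in>stages T. h (Tset T L u))"
  unfolding TM_def by (simp add: prod_unfold_prod_mset multiset.map_comp comp_def split_beta)

lemma in_EM: "A \<in># EM T \<Longrightarrow> \<exists>L u k. (L, u) \<in> stages T \<and> k < sizes T ! L \<and> A = Eset T L u k"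
  unfolding EM_def using finite_stages[of T]
  by (auto simp: set_mset_sum split: prod.splits) blast

lemma in_TM: "A \<in># TM T \<Longrightarrow> \<exists>L u. (L, u) \<in> stages T \<and> A = Tset T L u"
  unfolding TM_def using finite_stages[of T] by auto

lemma EM_props: "staged_tree T \<Longrightarrow> A \<in># EM T \<Longrightarrow> A \<subseteq> paths T \<and> A \<noteq> {}"
  using in_EM[of A T] sets_nonempty(2)[of T] by (auto simp: Eset_def)

lemma TM_props: "staged_tree T \<Longrightarrow> A \<in># TM T \<Longrightarrow> A \<subseteq> paths T \<and> A \<noteq> {}"
  using in_TM[of A T] sets_nonempty(1)[of T] by (auto simp: Tset_def)

lemma GT_mset: "GT T w = (\<Sum>A\<in>#EM T. xlx (\<Sum>l\<in>A. w l)) - (\<Sum>A\<in>#TM T. xlx (\<Sum>l\<in>A. w l))"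
  unfolding GT_def sum_EM sum_TM by (simp add: sum_subtractf split_beta)

lemma transfer_sum:
  fixes w :: "nat list \<Rightarrow> 'b::comm_monoid_add"
  assumes bij: "bij_betw \<phi> (paths S) (paths S')" and A: "A \<subseteq> paths S'"
  shows "(\<Sum>l\<in>{l \<in> paths S. \<phi> l \<in> A}. w l) = (\<Sum>m\<in>A. w (inv_into (paths S) \<phi> m))"
    and "card {l \<in> paths S. \<phi> l \<in> A} = card A"
proof -
  have im: "\<phi> ` {l \<in> paths S. \<phi> l \<in> A} = A"
  proof
    show "\<phi> ` {l \<in> paths S. \<phi> l \<in> A} \<subseteq> A" by auto
    show "A \<subseteq> \<phi> ` {l \<in> paths S. \<phi> l \<in> A}"
    proof
      fix m assume m: "m \<in> A"
      then have "m \<in> \<phi> ` paths S" using A bij by (auto simp: bij_betw_def)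
      then obtain l where "l \<in> paths S" "m = \<phi> l" by auto
      then show "m \<in> \<phi> ` {l \<in> paths S. \<phi> l \<in> A}" using m by auto
    qed
  qed
  have b: "bij_betw \<phi> {l \<in> paths S. \<phi> l \<in> A} A"
    by (rule bij_betw_subset[OF bij _ im]) auto
  have inj: "inj_on \<phi> (paths S)" using bij by (simp add: bij_betw_def)
  have "(\<Sum>m\<in>A. w (inv_into (paths S) \<phi> m)) = (\<Sum>l\<in>{l \<in> paths S. \<phi> l \<in> A}. w (inv_into (paths S) \<phi> (\<phi> l)))"
    by (rule sum.reindex_bij_betw[OF b, symmetric])
  also have "\<dots> = (\<Sum>l\<in>{l \<in> paths S. \<phi> l \<in> A}. w l)"
    by (rule sum.cong[OF refl]) (use inj in \<open>simp add: inv_into_f_f\<close>)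
  finally show "(\<Sum>l\<in>{l \<in> paths S. \<phi> l \<in> A}. w l) = (\<Sum>m\<in>A. w (inv_into (paths S) \<phi> m))" by simp
  show "card {l \<in> paths S. \<phi> l \<in> A} = card A" by (rule bij_betw_same_card[OF b])
qed

lemma transfer_lik:
  fixes w :: "nat list \<Rightarrow> real"
  assumes bij: "bij_betw \<phi> (paths S) (paths S')"
  shows "(\<Sum>l\<in>paths S. w l * ln (restrict (q \<circ> \<phi>) (paths S) l))
       = (\<Sum>m\<in>paths S'. w (inv_into (paths S) \<phi> m) * ln (q m))"
proof -
  have inj: "inj_on \<phi> (paths S)" using bij by (simp add: bij_betw_def)
  have "(\<Sum>m\<in>paths S'. w (inv_into (paths S) \<phi> m) * ln (q m))
      = (\<Sum>l\<in>paths S. w (inv_into (paths S) \<phi> (\<phi> l)) * ln (q (\<phi> l)))"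
    by (rule sum.reindex_bij_betw[OF bij, symmetric])
  also have "\<dots> = (\<Sum>l\<in>paths S. w l * ln (restrict (q \<circ> \<phi>) (paths S) l))"
    by (rule sum.cong[OF refl]) (use inj in \<open>simp add: inv_into_f_f\<close>)
  finally show ?thesis by simp
qed

lemma GT_equiv:
  fixes w :: "nat list \<Rightarrow> real"
  assumes st: "staged_tree S" "staged_tree S'" and sl: "single_level_stages S" "single_level_stages S'"
    and eq: "stat_equiv S S' \<phi>" and wpos: "\<forall>l. w l > 0"
  shows "GT S w = GT S' (\<lambda>m. w (inv_into (paths S) \<phi> m))"
proof -
  let ?w' = "\<lambda>m. w (inv_into (paths S) \<phi> m)"
  have bij: "bij_betw \<phi> (paths S) (paths S')" and mod: "model S = (\<lambda>p. restrict (p \<circ> \<phi>) (paths S)) ` model S'"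
    using eq by (auto simp: stat_equiv_def)
  have w'pos: "\<forall>m. ?w' m > 0" using wpos by simp
  obtain p where p: "p \<in> model S" "(\<Sum>l\<in>paths S. w l * ln (p l)) = GT S w"
    using MLE_attain[OF st(1) sl(1) wpos] by blast
  obtain q where q: "q \<in> model S'" "p = restrict (q \<circ> \<phi>) (paths S)" using p(1) mod by blast
  have "GT S w = (\<Sum>m\<in>paths S'. ?w' m * ln (q m))" using p(2) q(2) transfer_lik[OF bij] by simp
  also have "\<dots> \<le> GT S' ?w'" by (rule MLE_upper[OF st(2) q(1) w'pos])
  finally have le1: "GT S w \<le> GT S' ?w'" .
  obtain q' where q': "q' \<in> model S'" "(\<Sum>m\<in>paths S'. ?w' m * ln (q' m)) = GT S' ?w'"
    using MLE_attain[OF st(2) sl(2) w'pos] by blast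
  have pm: "restrict (q' \<circ> \<phi>) (paths S) \<in> model S" using q'(1) mod by blast
  have "GT S' ?w' = (\<Sum>l\<in>paths S. w l * ln (restrict (q' \<circ> \<phi>) (paths S) l))"
    using q'(2) transfer_lik[OF bij] by simp
  also have "\<dots> \<le> GT S w" by (rule MLE_upper[OF st(1) pm wpos])
  finally show ?thesis using le1 by simp
qed

definition H :: "stree \<Rightarrow> (nat list \<Rightarrow> nat) \<Rightarrow> real \<Rightarrow> nat list set \<Rightarrow> real" where
  "H T N a A = Gamma (a / real (card (paths T)) * real (card A) + real (\<Sum>l\<in>A. N l))
               / Gamma (a / real (card (paths T)) * real (card A))"

lemma stage_factor:
  assumes st: "staged_tree T" and S: "(L, u) \<in> stages T"
  shows "(let ad = dot_alpha T a L u; r = sizes T ! L; nbar = (\<Sum>k<r. cnt T N L u k)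
      in Gamma ad / Gamma (ad + real nbar) *
         (\<Prod>k<r. Gamma (ad / real r + real (cnt T N L u k)) / Gamma (ad / real r)))
    = (\<Prod>k<sizes T ! L. H T N a (Eset T L u k)) / H T N a (Tset T L u)"
proof -
  have L: "L < length (sizes T)" using S by (auto simp: stages_iff)
  have c1: "cnt T N L u k = (\<Sum>l\<in>Eset T L u k. N l)" for k by (simp add: cnt_def Eset_def)
  have c2: "(\<Sum>k<sizes T ! L. cnt T N L u k) = (\<Sum>l\<in>Tset T L u. N l)"
    using Tset_partition[OF st L, where w=N and u=u] c1 by simp
  have a1: "dot_alpha T a L u = a / real (card (paths T)) * real (card (Tset T L u))"
    by (rule ad_Tset[OF st S])
  have pe: "(\<Prod>k<sizes T ! L. Gamma (dot_alpha T a L u / real (sizes T ! L) + real (cnt T N L u k))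
              / Gamma (dot_alpha T a L u / real (sizes T ! L)))
      = (\<Prod>k<sizes T ! L. H T N a (Eset T L u k))"
  proof (rule prod.cong[OF refl])
    fix k assume "k \<in> {..<sizes T ! L}"
    then have k: "k < sizes T ! L" by simp
    show "Gamma (dot_alpha T a L u / real (sizes T ! L) + real (cnt T N L u k))
              / Gamma (dot_alpha T a L u / real (sizes T ! L)) = H T N a (Eset T L u k)"
      unfolding H_def ad_Eset[OF st S k] c1 ..
  qed
  have sw: "x / y * P = P / (y / x)" for x y P :: real
    by (cases "x = 0"; cases "y = 0") (simp_all add: field_simps)
  show ?thesis unfolding Let_def pe
    unfolding c2 a1 H_def by (rule sw)
qed

lemma score_repr:
  assumes st: "staged_tree T"
  shows "cs_bdeu T N a = (\<Prod>A\<in>#EM T. H T N a A) / (\<Prod>A\<in>#TM T. H T N a A)"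
proof -
  have "cs_bdeu T N a = (\<Prod>(L, u)\<in>stages T. (\<Prod>k<sizes T ! L. H T N a (Eset T L u k)) / H T N a (Tset T L u))"
    unfolding cs_bdeu_def
  proof (rule prod.cong[OF refl], clarify)
    fix L u assume S: "(L, u) \<in> stages T"
    show "(let ad = dot_alpha T a L u; r = sizes T ! L; nbar = (\<Sum>k<r. cnt T N L u k)
      in Gamma ad / Gamma (ad + real nbar) *
         (\<Prod>k<r. Gamma (ad / real r + real (cnt T N L u k)) / Gamma (ad / real r)))
    = (\<Prod>k<sizes T ! L. H T N a (Eset T L u k)) / H T N a (Tset T L u)"
      by (rule stage_factor[OF st S])
  qed
  also have "\<dots> = (\<Prod>(L, u)\<in>stages T. \<Prod>k<sizes T ! L. H T N a (Eset T L u k)) / (\<Prod>(L, u)\<in>stages T. H T N a (Tset T L u))"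
    by (simp add: prod_dividef split_beta)
  finally show ?thesis unfolding prod_EM prod_TM .
qed

lemma H_pos:
  assumes "A \<subseteq> paths T" "A \<noteq> {}" "a > 0"
  shows "H T N a A > 0"
proof -
  have fA: "finite A" using assms(1) finite_paths finite_subset by blast
  have cA: "real (card A) > 0" using fA assms(2) by (simp add: card_gt_0_iff)
  have cP: "real (card (paths T)) > 0" using finite_paths[of T] assms(1,2) by (simp add: card_gt_0_iff) blast
  have x: "a / real (card (paths T)) * real (card A) > 0" using assms(3) cA cP by simp
  have "real (\<Sum>l\<in>A. N l) \<ge> 0" by (simp add: sum_nonneg)
  then have "a / real (card (paths T)) * real (card A) + real (\<Sum>l\<in>A. N l) > 0" using x by linarith
  then show ?thesis unfolding H_def using x by simp
qed

lemma prod_mset_pos: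
  fixes f :: "'a \<Rightarrow> real"
  shows "\<forall>A\<in>#M. f A > 0 \<Longrightarrow> (\<Prod>A\<in>#M. f A) > 0"
  by (induction M) auto

theorem mainTheorem6:
  fixes S S' :: stree and \<phi> :: "nat list \<Rightarrow> nat list" and \<alpha> :: real
    and N N' :: "nat list \<Rightarrow> nat"
  assumes "staged_tree S" and "staged_tree S'"
    and "square_free S" and "square_free S'"
    and "single_level_stages S" and "single_level_stages S'"
    and "stat_equiv S S' \<phi>"
    and "\<alpha> > 0"
    and "\<forall>l\<in>paths S. N' (\<phi> l) = N l"
  shows "cs_bdeu S N \<alpha> = cs_bdeu S' N' \<alpha>"
proof -
  note st = assms(1,2) and sl = assms(5,6) and eq = assms(7) and apos = assms(8) and NN = assms(9)
  have bij: "bij_betw \<phi> (paths S) (paths S')" using eq by (simp add: stat_equiv_def)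
  have inj: "inj_on \<phi> (paths S)" using bij by (simp add: bij_betw_def)
  have cardP: "card (paths S) = card (paths S')" by (rule bij_betw_same_card[OF bij])
  define pull where "pull A = {l \<in> paths S. \<phi> l \<in> A}" for A
  define P where "P = EM S + image_mset pull (TM S')"
  define Q where "Q = TM S + image_mset pull (EM S')"
  have pullprops: "finite (pull A) \<and> pull A \<noteq> {} \<and> pull A \<subseteq> paths S" if "A \<subseteq> paths S'" "A \<noteq> {}" for A
  proof -
    have "card (pull A) = card A" unfolding pull_def by (rule transfer_sum(2)[OF bij that(1)])
    moreover have "finite A" using that(1) finite_paths finite_subset by blast
    ultimately have "card (pull A) > 0" using that(2) by (simp add: card_gt_0_iff)
    then show ?thesis by (auto simp: pull_def card_gt_0_iff)
  qed
  have finP: "\<forall>B\<in>#P+Q. finite B \<and> B \<noteq> {}"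
  proof
    fix B assume B: "B \<in># P + Q"
    show "finite B \<and> B \<noteq> {}"
    proof (cases "B \<in># EM S \<or> B \<in># TM S")
      case True
      then have "B \<subseteq> paths S \<and> B \<noteq> {}" using EM_props[OF st(1)] TM_props[OF st(1)] by blast
      then show ?thesis using finite_paths finite_subset by blast
    next
      case False
      then obtain A where "A \<in># EM S' \<or> A \<in># TM S'" "B = pull A" using B by (auto simp: P_def Q_def)
      then have "A \<subseteq> paths S' \<and> A \<noteq> {}" "B = pull A" using EM_props[OF st(2)] TM_props[OF st(2)] by blast+
      then show ?thesis using pullprops by blast
    qed
  qed
  have PQ: "P = Q"
  proof (rule mset_xlx_eq[OF finP])
    fix w :: "nat list \<Rightarrow> real" assume wpos: "\<forall>x. w x > 0"
    let ?w' = "\<lambda>m. w (inv_into (paths S) \<phi> m)"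
    have tr: "(\<Sum>A\<in>#M. xlx (\<Sum>l\<in>pull A. w l)) = (\<Sum>A\<in>#M. xlx (\<Sum>m\<in>A. ?w' m))"
      if "\<forall>A\<in>#M. A \<subseteq> paths S'" for M
      using that by (intro arg_cong[where f=sum_mset] image_mset_cong) (simp add: pull_def transfer_sum(1)[OF bij])
    have g: "GT S w = GT S' ?w'" by (rule GT_equiv[OF st sl eq wpos])
    have tE: "(\<Sum>A\<in>#EM S'. xlx (\<Sum>l\<in>pull A. w l)) = (\<Sum>A\<in>#EM S'. xlx (\<Sum>m\<in>A. ?w' m))"
      using tr EM_props[OF st(2)] by blast
    have tT: "(\<Sum>A\<in>#TM S'. xlx (\<Sum>l\<in>pull A. w l)) = (\<Sum>A\<in>#TM S'. xlx (\<Sum>m\<in>A. ?w' m))"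
      using tr TM_props[OF st(2)] by blast
    show "(\<Sum>B\<in>#P. xlx (\<Sum>x\<in>B. w x)) = (\<Sum>B\<in>#Q. xlx (\<Sum>x\<in>B. w x))"
      using g tE tT unfolding P_def Q_def GT_mset by (simp add: multiset.map_comp comp_def)
  qed
  let ?H = "H S N \<alpha>" and ?H' = "H S' N' \<alpha>"
  have Hpull: "?H (pull A) = ?H' A" if "A \<subseteq> paths S'" for A
  proof -
    have c: "card (pull A) = card A" unfolding pull_def by (rule transfer_sum(2)[OF bij that])
    have "(\<Sum>l\<in>pull A. N l) = (\<Sum>m\<in>A. N (inv_into (paths S) \<phi> m))"
      unfolding pull_def by (rule transfer_sum(1)[OF bij that])
    also have "\<dots> = (\<Sum>m\<in>A. N' m)"
    proof (rule sum.cong[OF refl])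
      fix m assume "m \<in> A"
      then have m: "m \<in> \<phi> ` paths S" using that bij by (auto simp: bij_betw_def)
      have "inv_into (paths S) \<phi> m \<in> paths S" using m by (rule inv_into_into)
      moreover have "\<phi> (inv_into (paths S) \<phi> m) = m" using m by (rule f_inv_into_f)
      ultimately show "N (inv_into (paths S) \<phi> m) = N' m" using NN by metis
    qed
    finally show ?thesis unfolding H_def c cardP by simp
  qed
  have pm: "(\<Prod>A\<in>#M. ?H (pull A)) = (\<Prod>A\<in>#M. ?H' A)" if "\<forall>A\<in>#M. A \<subseteq> paths S'" for M
    using that by (intro arg_cong[where f=prod_mset] image_mset_cong) (simp add: Hpull)
  have pE: "(\<Prod>A\<in>#EM S'. ?H (pull A)) = (\<Prod>A\<in>#EM S'. ?H' A)" using pm EM_props[OF st(2)] by blast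
  have pT: "(\<Prod>A\<in>#TM S'. ?H (pull A)) = (\<Prod>A\<in>#TM S'. ?H' A)" using pm TM_props[OF st(2)] by blast
  have "(\<Prod>A\<in>#P. ?H A) = (\<Prod>A\<in>#Q. ?H A)" using PQ by simp
  then have key: "(\<Prod>A\<in>#EM S. ?H A) * (\<Prod>A\<in>#TM S'. ?H' A) = (\<Prod>A\<in>#TM S. ?H A) * (\<Prod>A\<in>#EM S'. ?H' A)"
    unfolding P_def Q_def using pE pT by (simp add: multiset.map_comp comp_def)
  have y1: "(\<Prod>A\<in>#TM S. ?H A) > 0"
    using TM_props[OF st(1)] H_pos apos by (intro prod_mset_pos) blast
  have y2: "(\<Prod>A\<in>#TM S'. ?H' A) > 0"
    using TM_props[OF st(2)] H_pos apos by (intro prod_mset_pos) blast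
  have "(\<Prod>A\<in>#EM S. ?H A) / (\<Prod>A\<in>#TM S. ?H A) = (\<Prod>A\<in>#EM S'. ?H' A) / (\<Prod>A\<in>#TM S'. ?H' A)"
  proof (subst frac_eq_eq)
    show "(\<Prod>A\<in>#TM S. ?H A) \<noteq> 0" using y1 by (metis less_irrefl)
    show "(\<Prod>A\<in>#TM S'. ?H' A) \<noteq> 0" using y2 by (metis less_irrefl)
    show "(\<Prod>A\<in>#EM S. ?H A) * (\<Prod>A\<in>#TM S'. ?H' A) = (\<Prod>A\<in>#EM S'. ?H' A) * (\<Prod>A\<in>#TM S. ?H A)"
      using key by (simp add: mult.commute)
  qed
  then show ?thesis unfolding score_repr[OF st(1)] score_repr[OF st(2)] .
qed

end
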